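(* Let $T$ be a tree of order $n$ and dissociation number $\psi$. If $v$ is a leaf of $T$ such that $\psi(T-v)=\psi(T)$, then $\Phi_{\overline{v}}(T)\le \min\{\Phi_v^0(T),\Phi_v^1(T)\}$ and $\Phi_{\overline{v}}(T)\le \frac{1}{3}\Phi(T)$.
   Context: All graphs are finite, simple and undirected. A dissociation set in a graph $G$ is a vertex subset $F$ such that the induced subgraph $G[F]$ has maximum degree at most $1$; a maximum dissociation set is one of maximum cardinality, and the dissociation number $\psi(G)$ is that cardinality. Let $MD(G)$ be the set of all maximum dissociation sets of $G$ and $\Phi(G)=|MD(G)|$. For a vertex $v$: $\Phi_{\overline{v}}(G)=|\{F\in MD(G): v\notin F\}|$, $\Phi_v^0(G)=|\{F\in MD(G): v\in F,\ d_{G[F]}(v)=0\}|$, $\Phi_v^1(G)=|\{F\in MD(G): v\in F,\ d_{G[F]}(v)=1\}|$. A leaf is a vertex of degree exactly one; $T-v$ denotes $T$ with $v$ deleted. *)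

theory Defs
  imports Main
begin

definition simple_graph :: "'a set \<Rightarrow> 'a set set \<Rightarrow> bool" where
  "simple_graph V E \<longleftrightarrow> finite V \<and> (\<forall>e\<in>E. e \<subseteq> V \<and> card e = 2)"

definition adj :: "'a set set \<Rightarrow> 'a \<Rightarrow> 'a \<Rightarrow> bool" where
  "adj E u v \<longleftrightarrow> {u, v} \<in> E"

definition degree :: "'a set set \<Rightarrow> 'a \<Rightarrow> nat" where
  "degree E v = card {e\<in>E. v \<in> e}"

definition is_walk :: "'a set \<Rightarrow> 'a set set \<Rightarrow> 'a list \<Rightarrow> bool" where
  "is_walk V E p \<longleftrightarrow> p \<noteq> [] \<and> set p \<subseteq> V \<and>
     (\<forall>i. Suc i < length p \<longrightarrow> adj E (p ! i) (p ! Suc i))"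

definition connected :: "'a set \<Rightarrow> 'a set set \<Rightarrow> bool" where
  "connected V E \<longleftrightarrow> V \<noteq> {} \<and>
     (\<forall>u\<in>V. \<forall>v\<in>V. \<exists>p. is_walk V E p \<and> hd p = u \<and> last p = v)"

definition is_cycle :: "'a set \<Rightarrow> 'a set set \<Rightarrow> 'a list \<Rightarrow> bool" where
  "is_cycle V E c \<longleftrightarrow> length c \<ge> 3 \<and> distinct c \<and> is_walk V E c \<and> adj E (last c) (hd c)"

definition acyclic_graph :: "'a set \<Rightarrow> 'a set set \<Rightarrow> bool" where
  "acyclic_graph V E \<longleftrightarrow> (\<nexists>c. is_cycle V E c)"

definition tree :: "'a set \<Rightarrow> 'a set set \<Rightarrow> bool" where
  "tree V E \<longleftrightarrow> simple_graph V E \<and> connected V E \<and> acyclic_graph V E"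

definition leaf :: "'a set set \<Rightarrow> 'a \<Rightarrow> bool" where
  "leaf E v \<longleftrightarrow> degree E v = 1"

definition induced_edges :: "'a set set \<Rightarrow> 'a set \<Rightarrow> 'a set set" where
  "induced_edges E F = {e\<in>E. e \<subseteq> F}"

definition delete_vertex_edges :: "'a set set \<Rightarrow> 'a \<Rightarrow> 'a set set" where
  "delete_vertex_edges E v = {e\<in>E. v \<notin> e}"

definition dissociation_set :: "'a set \<Rightarrow> 'a set set \<Rightarrow> 'a set \<Rightarrow> bool" where
  "dissociation_set V E F \<longleftrightarrow> F \<subseteq> V \<and> (\<forall>u\<in>F. degree (induced_edges E F) u \<le> 1)"

definition dissociation_number :: "'a set \<Rightarrow> 'a set set \<Rightarrow> nat" where
  "dissociation_number V E = Max (card ` {F. dissociation_set V E F})"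

definition max_dissociation_sets :: "'a set \<Rightarrow> 'a set set \<Rightarrow> 'a set set" where
  "max_dissociation_sets V E =
     {F. dissociation_set V E F \<and> card F = dissociation_number V E}"

definition Phi :: "'a set \<Rightarrow> 'a set set \<Rightarrow> nat" where
  "Phi V E = card (max_dissociation_sets V E)"

definition Phi_bar :: "'a set \<Rightarrow> 'a set set \<Rightarrow> 'a \<Rightarrow> nat" where
  "Phi_bar V E v = card {F\<in>max_dissociation_sets V E. v \<notin> F}"

definition Phi0 :: "'a set \<Rightarrow> 'a set set \<Rightarrow> 'a \<Rightarrow> nat" where
  "Phi0 V E v = card {F\<in>max_dissociation_sets V E. v \<in> F \<and> degree (induced_edges E F) v = 0}"

definition Phi1 :: "'a set \<Rightarrow> 'a set set \<Rightarrow> 'a \<Rightarrow> nat" where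
  "Phi1 V E v = card {F\<in>max_dissociation_sets V E. v \<in> F \<and> degree (induced_edges E F) v = 1}"

end

theory Submission
  imports Defs
begin

definition nbr :: "'a set set \<Rightarrow> 'a \<Rightarrow> 'a set" where
  "nbr E x = {y. {x, y} \<in> E}"

lemma nbr_sym: "y \<in> nbr E x \<longleftrightarrow> x \<in> nbr E y"
  by (simp add: nbr_def insert_commute)

lemma nbr_irrefl: "simple_graph V E \<Longrightarrow> x \<notin> nbr E x"
  unfolding nbr_def simple_graph_def by force

lemma nbr_sub: "simple_graph V E \<Longrightarrow> nbr E x \<subseteq> V"
  unfolding nbr_def simple_graph_def by blast

lemma deg_induced:
  assumes sg: "simple_graph V E" and x: "x \<in> F"
  shows "degree (induced_edges E F) x = card (F \<inter> nbr E x)"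
proof -
  have eq: "{e\<in>induced_edges E F. x \<in> e} = (\<lambda>y. {x, y}) ` (F \<inter> nbr E x)"
  proof
    show "{e\<in>induced_edges E F. x \<in> e} \<subseteq> (\<lambda>y. {x, y}) ` (F \<inter> nbr E x)"
    proof
      fix e assume "e \<in> {e\<in>induced_edges E F. x \<in> e}"
      hence e: "e \<in> E" "e \<subseteq> F" "x \<in> e" by (auto simp: induced_edges_def)
      hence "card e = 2" using sg by (auto simp: simple_graph_def)
      then obtain a b where ab: "e = {a, b}" "a \<noteq> b" by (auto simp: card_2_iff)
      then obtain y where "e = {x, y}" using e by blast
      thus "e \<in> (\<lambda>y. {x, y}) ` (F \<inter> nbr E x)" using e by (auto simp: nbr_def)
    qed
  next
    show "(\<lambda>y. {x, y}) ` (F \<inter> nbr E x) \<subseteq> {e\<in>induced_edges E F. x \<in> e}"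
      using x by (auto simp: nbr_def induced_edges_def)
  qed
  have inj: "inj_on (\<lambda>y. {x, y}) (F \<inter> nbr E x)"
  proof
    fix a b assume a: "a \<in> F \<inter> nbr E x" and b: "b \<in> F \<inter> nbr E x" and "{x, a} = {x, b}"
    moreover have "a \<noteq> x" "b \<noteq> x" using a b nbr_irrefl[OF sg, of x] by auto
    ultimately show "a = b" by (metis doubleton_eq_iff)
  qed
  show ?thesis unfolding degree_def eq using card_image[OF inj] by simp
qed

lemma ds_iff:
  assumes sg: "simple_graph V E"
  shows "dissociation_set V E F \<longleftrightarrow> F \<subseteq> V \<and> (\<forall>x\<in>F. card (F \<inter> nbr E x) \<le> 1)"
  unfolding dissociation_set_def using deg_induced[OF sg] by auto

lemma ds_le:
  assumes sg: "simple_graph V E" and "dissociation_set V E F"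
  shows "card F \<le> dissociation_number V E"
proof -
  have "{F. dissociation_set V E F} \<subseteq> Pow V" by (auto simp: dissociation_set_def)
  hence "finite {F. dissociation_set V E F}" using sg
    by (meson finite_Pow_iff rev_finite_subset simple_graph_def)
  thus ?thesis unfolding dissociation_number_def using assms(2) by auto
qed


lemma card_le1_single: "finite X \<Longrightarrow> a \<in> X \<Longrightarrow> card X \<le> 1 \<Longrightarrow> X = {a}"
  by (auto simp: card_le_Suc0_iff_eq)

lemma md_iff: "F \<in> max_dissociation_sets V E \<longleftrightarrow> dissociation_set V E F \<and> card F = dissociation_number V E"
  by (simp add: max_dissociation_sets_def)

theorem lemma3p1:
  fixes V :: "'a set" and E :: "'a set set" and v :: 'a
  assumes "tree V E"
    and "v \<in> V" and "leaf E v"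
    and "dissociation_number (V - {v}) (delete_vertex_edges E v) = dissociation_number V E"
  shows "Phi_bar V E v \<le> min (Phi0 V E v) (Phi1 V E v)
         \<and> 3 * Phi_bar V E v \<le> Phi V E"
proof -
  have sg: "simple_graph V E" using assms(1) by (simp add: tree_def)
  have finV: "finite V" using sg by (simp add: simple_graph_def)
  define N where "N = nbr E"
  define psi where "psi = dissociation_number V E"
  define MD where "MD = max_dissociation_sets V E"
  have Nsym: "\<And>x y. y \<in> N x \<longleftrightarrow> x \<in> N y" unfolding N_def by (rule nbr_sym)
  have Nirr: "\<And>x. x \<notin> N x" unfolding N_def using nbr_irrefl[OF sg] by blast
  have NV: "\<And>x. N x \<subseteq> V" unfolding N_def using nbr_sub[OF sg] by blast
  have dsI: "\<And>F. dissociation_set V E F \<longleftrightarrow> F \<subseteq> V \<and> (\<forall>x\<in>F. card (F \<inter> N x) \<le> 1)"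
    unfolding N_def by (rule ds_iff[OF sg])
  have MDI: "\<And>F. F \<in> MD \<longleftrightarrow> F \<subseteq> V \<and> (\<forall>x\<in>F. card (F \<inter> N x) \<le> 1) \<and> card F = psi"
    unfolding MD_def psi_def md_iff dsI by blast
  have le: "\<And>F. F \<subseteq> V \<Longrightarrow> (\<forall>x\<in>F. card (F \<inter> N x) \<le> 1) \<Longrightarrow> card F \<le> psi"
    unfolding psi_def using ds_le[OF sg] dsI by blast
  have finMD: "finite MD"
    by (rule finite_subset[of _ "Pow V"]) (use MDI finV in auto)
  have "induced_edges E V = E" using sg by (auto simp: induced_edges_def simple_graph_def)
  hence "card (V \<inter> N v) = 1" using assms(3) deg_induced[OF sg assms(2)]
    by (simp add: leaf_def N_def)
  then obtain u where Nv: "N v = {u}" using NV[of v] by (metis card_1_singletonE inf.absorb2)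
  have uv: "u \<noteq> v" using Nirr[of v] Nv by auto
  have uV: "u \<in> V" using NV[of v] Nv by auto
  have Nv': "\<And>x. v \<in> N x \<longleftrightarrow> x = u" using Nv Nsym by blast
  define A where "A = {F\<in>MD. v \<notin> F}"
  define B0 where "B0 = {F\<in>MD. v \<in> F \<and> card (F \<inter> N v) = 0}"
  define B1 where "B1 = {F\<in>MD. v \<in> F \<and> card (F \<inter> N v) = 1}"
  have PhiA: "Phi_bar V E v = card A" unfolding Phi_bar_def A_def MD_def by simp
  have PhiB0: "Phi0 V E v = card B0" unfolding Phi0_def B0_def MD_def
    using deg_induced[OF sg, of v] N_def by (metis (lifting))
  have PhiB1: "Phi1 V E v = card B1" unfolding Phi1_def B1_def MD_def
    using deg_induced[OF sg, of v] N_def by (metis (lifting))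
  have PhiMD: "Phi V E = card MD" unfolding Phi_def MD_def by simp
  have Astruct: "u \<in> F \<and> card (F \<inter> N u) = 1" if F: "F \<in> A" for F
  proof -
    have FV: "F \<subseteq> V" and Fd: "\<forall>x\<in>F. card (F \<inter> N x) \<le> 1" and Fc: "card F = psi"
      and vF: "v \<notin> F" using F by (auto simp: A_def MDI)
    have finF: "finite F" using FV finV finite_subset by blast
    show ?thesis
    proof (rule ccontr)
      assume H: "\<not> (u \<in> F \<and> card (F \<inter> N u) = 1)"
      have "card (insert v F) \<le> psi"
      proof (rule le)
        show "insert v F \<subseteq> V" using FV assms(2) by auto
        show "\<forall>x\<in>insert v F. card (insert v F \<inter> N x) \<le> 1"
        proof
          fix x assume x: "x \<in> insert v F"
          show "card (insert v F \<inter> N x) \<le> 1"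
          proof (cases "x = v")
            case True
            have "insert v F \<inter> N x \<subseteq> {u}" using True Nv by auto
            hence "card (insert v F \<inter> N x) \<le> card {u}" by (intro card_mono) auto
            thus ?thesis by simp
          next
            case False
            hence xF: "x \<in> F" using x by auto
            show ?thesis
            proof (cases "x = u")
              case True
              hence "card (F \<inter> N x) \<noteq> 1" using H xF by auto
              hence "card (F \<inter> N x) = 0" using Fd xF by force
              hence "F \<inter> N x = {}" using finF by simp
              hence "insert v F \<inter> N x \<subseteq> {v}" by auto
              hence "card (insert v F \<inter> N x) \<le> card {v}" by (intro card_mono) auto
              thus ?thesis by simp
            next
              case False
              hence "insert v F \<inter> N x = F \<inter> N x" using Nv' by auto
              thus ?thesis using Fd xF by simp
            qed
          qed
        qed
      qed
      thus False using Fc vF finF by simp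
    qed
  qed
  define f0 where "f0 F = insert v (F - {u})" for F
  have f0B: "f0 F \<in> B0" if F: "F \<in> A" for F
  proof -
    have FV: "F \<subseteq> V" and Fd: "\<forall>x\<in>F. card (F \<inter> N x) \<le> 1" and Fc: "card F = psi"
      and vF: "v \<notin> F" using F by (auto simp: A_def MDI)
    have finF: "finite F" using FV finV finite_subset by blast
    have uF: "u \<in> F" using Astruct F by blast
    have "card F > 0" using uF finF card_gt_0_iff by blast
    hence c: "card (f0 F) = psi" using Fc vF uF finF uv by (simp add: f0_def)
    have d0: "f0 F \<inter> N v = {}" using Nv uv by (auto simp: f0_def)
    have "\<forall>x\<in>f0 F. card (f0 F \<inter> N x) \<le> 1"
    proof
      fix x assume x: "x \<in> f0 F"
      show "card (f0 F \<inter> N x) \<le> 1"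
      proof (cases "x = v")
        case True thus ?thesis using d0 by simp
      next
        case False
        hence xF: "x \<in> F" "x \<noteq> u" using x by (auto simp: f0_def)
        hence "f0 F \<inter> N x \<subseteq> F \<inter> N x" using Nv' by (auto simp: f0_def)
        hence "card (f0 F \<inter> N x) \<le> card (F \<inter> N x)" using finF by (intro card_mono) auto
        thus ?thesis using Fd xF by auto
      qed
    qed
    moreover have "f0 F \<subseteq> V" using FV assms(2) by (auto simp: f0_def)
    ultimately show ?thesis using c d0 by (auto simp: B0_def MDI f0_def)
  qed
  have f0inj: "inj_on f0 A"
  proof
    fix F G assume F: "F \<in> A" and G: "G \<in> A" and eq: "f0 F = f0 G"
    have "F = insert u (f0 F - {v})" using Astruct[OF F] F uv by (auto simp: f0_def A_def)
    moreover have "G = insert u (f0 G - {v})" using Astruct[OF G] G uv by (auto simp: f0_def A_def)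
    ultimately show "F = G" using eq by simp
  qed
  have finB0: "finite B0" using finMD by (simp add: B0_def)
  have AB0: "card A \<le> card B0"
    using card_inj_on_le[OF f0inj _ finB0] f0B by blast
  define w where "w F = the_elem (F \<inter> N u)" for F
  have wprop: "F \<inter> N u = {w F}" if "F \<in> A" for F
  proof -
    have "card (F \<inter> N u) = 1" using Astruct that by blast
    then obtain z where "F \<inter> N u = {z}" by (auto simp: card_1_singleton_iff)
    thus ?thesis by (simp add: w_def)
  qed
  define f1 where "f1 F = insert v (F - {w F})" for F
  have f1B: "f1 F \<in> B1" if F: "F \<in> A" for F
  proof -
    have FV: "F \<subseteq> V" and Fd: "\<forall>x\<in>F. card (F \<inter> N x) \<le> 1" and Fc: "card F = psi"
      and vF: "v \<notin> F" using F by (auto simp: A_def MDI)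
    have finF: "finite F" using FV finV finite_subset by blast
    have uF: "u \<in> F" using Astruct F by blast
    have wF: "w F \<in> F" "w F \<in> N u" using wprop[OF F] by auto
    have wu: "w F \<noteq> u" using wF Nirr by blast
    have wv: "w F \<noteq> v" using wF vF by blast
    have "card F > 0" using uF finF card_gt_0_iff by blast
    hence c: "card (f1 F) = psi" using Fc vF wF finF by (simp add: f1_def)
    have d1: "f1 F \<inter> N v = {u}" using Nv uF wu by (auto simp: f1_def)
    have du: "f1 F \<inter> N u = {v}" using wprop[OF F] Nv' by (auto simp: f1_def)
    have "\<forall>x\<in>f1 F. card (f1 F \<inter> N x) \<le> 1"
    proof
      fix x assume x: "x \<in> f1 F"
      show "card (f1 F \<inter> N x) \<le> 1"
      proof (cases "x = v \<or> x = u")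
        case True thus ?thesis using d1 du by auto
      next
        case False
        hence xF: "x \<in> F" "x \<noteq> u" "x \<noteq> v" using x by (auto simp: f1_def)
        hence "f1 F \<inter> N x \<subseteq> F \<inter> N x" using Nv' by (auto simp: f1_def)
        hence "card (f1 F \<inter> N x) \<le> card (F \<inter> N x)" using finF by (intro card_mono) auto
        thus ?thesis using Fd xF by auto
      qed
    qed
    moreover have "f1 F \<subseteq> V" using FV assms(2) by (auto simp: f1_def)
    ultimately show ?thesis using c d1 by (auto simp: B1_def MDI f1_def)
  qed
  have f1inj: "inj_on f1 A"
  proof
    fix F1 F2 assume F1: "F1 \<in> A" and F2: "F2 \<in> A" and eq: "f1 F1 = f1 F2"
    show "F1 = F2"
    proof (cases "w F1 = w F2")
      case True
      have "F1 = insert (w F1) (f1 F1 - {v})" using wprop[OF F1] F1 by (auto simp: f1_def A_def)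
      moreover have "F2 = insert (w F2) (f1 F2 - {v})" using wprop[OF F2] F2 by (auto simp: f1_def A_def)
      ultimately show ?thesis using eq True by simp
    next
      case False
      define w1 where "w1 = w F1"
      define w2 where "w2 = w F2"
      have ne: "w1 \<noteq> w2" using False by (simp add: w1_def w2_def)
      have F1V: "F1 \<subseteq> V" and F1d: "\<forall>x\<in>F1. card (F1 \<inter> N x) \<le> 1" and F1c: "card F1 = psi"
        and vF1: "v \<notin> F1" using F1 by (auto simp: A_def MDI)
      have F2d: "\<forall>x\<in>F2. card (F2 \<inter> N x) \<le> 1" and vF2: "v \<notin> F2" using F2 by (auto simp: A_def MDI)
      have fin1: "finite F1" using F1V finV finite_subset by blast
      have F2V: "F2 \<subseteq> V" using F2 by (auto simp: A_def MDI)
      have fin2: "finite F2" using F2V finV finite_subset by blast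
      have uF1: "u \<in> F1" using Astruct F1 by blast
      have uF2: "u \<in> F2" using Astruct F2 by blast
      have w1p: "F1 \<inter> N u = {w1}" using wprop[OF F1] w1_def by simp
      have w2p: "F2 \<inter> N u = {w2}" using wprop[OF F2] w2_def by simp
      have w1u: "w1 \<noteq> u" "w2 \<noteq> u" using w1p w2p Nirr by blast+
      define S where "S = F1 - {w1}"
      have e: "insert v (F1 - {w1}) = insert v (F2 - {w2})" using eq by (simp add: f1_def w1_def w2_def)
      have "S = insert v (F1 - {w1}) - {v}" using vF1 unfolding S_def by auto
      also have "\<dots> = insert v (F2 - {w2}) - {v}" using e by simp
      also have "\<dots> = F2 - {w2}" using vF2 by auto
      finally have S2: "S = F2 - {w2}" .
      have w2F1: "w2 \<notin> F1" using S2 ne unfolding S_def by blast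
      have w1F2: "w1 \<notin> F2" using S2 ne unfolding S_def by blast
      have uS: "u \<in> S" using uF1 w1u unfolding S_def by blast
      have w1F1: "w1 \<in> F1" using w1p by blast
      have w2F2: "w2 \<in> F2" using w2p by blast
      have Nw1: "F1 \<inter> N w1 = {u}"
      proof -
        have "u \<in> F1 \<inter> N w1" using uF1 w1p Nsym by blast
        moreover have "card (F1 \<inter> N w1) \<le> 1" using F1d w1F1 by blast
        ultimately show ?thesis using fin1
          by (intro card_le1_single) auto
      qed
      have Nw2: "F2 \<inter> N w2 = {u}"
      proof -
        have "u \<in> F2 \<inter> N w2" using uF2 w2p Nsym by blast
        moreover have "card (F2 \<inter> N w2) \<le> 1" using F2d w2F2 by blast
        ultimately show ?thesis using fin2
          by (intro card_le1_single) auto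
      qed
      define G where "G = insert v (insert w1 (insert w2 (S - {u})))"
      have finS: "finite S" using fin1 S_def by simp
      have cS: "card S = psi - 1" using F1c w1F1 fin1 S_def by simp
      have psi0: "psi > 0" using F1c fin1 uF1 card_gt_0_iff by blast
      have vw: "v \<noteq> w1" "v \<noteq> w2" using w1F1 w2F2 vF1 vF2 by blast+
      have vS: "v \<notin> S" "w1 \<notin> S" "w2 \<notin> S" using vF1 S_def S2 by auto
      have cSp: "card S > 0" using uS finS card_gt_0_iff by blast
      have cG: "card G = psi + 1"
        unfolding G_def using finS vS vw ne uS cS cSp psi0 card_Diff_singleton[OF uS]
        by (simp add: card_insert_if)
      have "card G \<le> psi"
      proof (rule le)
        show "G \<subseteq> V" unfolding G_def S_def using F1V F2V w1F1 w2F2 assms(2) by blast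
        show "\<forall>x\<in>G. card (G \<inter> N x) \<le> 1"
        proof
          fix x assume x: "x \<in> G"
          have finG: "finite G" unfolding G_def using finS by simp
          show "card (G \<inter> N x) \<le> 1"
          proof -
            consider "x = v" | "x = w1" | "x = w2" | "x \<in> S" "x \<noteq> u" using x unfolding G_def by auto
            thus ?thesis
            proof cases
              case 1
              have "u \<notin> G" using uv w1u vS unfolding G_def by auto
              hence "G \<inter> N x = {}" using 1 Nv by auto
              thus ?thesis by simp
            next
              case 2
              have "G \<inter> N x \<subseteq> {w2}"
              proof
                fix y assume y: "y \<in> G \<inter> N x"
                have yS: "y \<in> S \<Longrightarrow> y \<in> F1" unfolding S_def by simp
                have "y \<noteq> v" using y 2 Nv' w1u by blast
                moreover have "y \<noteq> w1" using y 2 Nirr by blast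
                moreover have "y \<notin> S - {u}" using y 2 Nw1 yS by blast
                ultimately show "y \<in> {w2}" using y unfolding G_def by blast
              qed
              hence "card (G \<inter> N x) \<le> card {w2}" by (intro card_mono) auto
              thus ?thesis by simp
            next
              case 3
              have "G \<inter> N x \<subseteq> {w1}"
              proof
                fix y assume y: "y \<in> G \<inter> N x"
                have yS: "y \<in> S \<Longrightarrow> y \<in> F2" unfolding S2 by simp
                have "y \<noteq> v" using y 3 Nv' w1u by blast
                moreover have "y \<noteq> w2" using y 3 Nirr by blast
                moreover have "y \<notin> S - {u}" using y 3 Nw2 yS by blast
                ultimately show "y \<in> {w1}" using y unfolding G_def by blast
              qed
              hence "card (G \<inter> N x) \<le> card {w1}" by (intro card_mono) auto
              thus ?thesis by simp
            next
              case 4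
              have xF1: "x \<in> F1" using 4 unfolding S_def by simp
              have xF2: "x \<in> F2" using 4 unfolding S2 by simp
              have "w2 \<notin> N x"
              proof
                assume "w2 \<in> N x"
                hence "x \<in> F2 \<inter> N w2" using Nsym xF2 by blast
                thus False using Nw2 4 by blast
              qed
              moreover have "w1 \<notin> N x"
              proof
                assume "w1 \<in> N x"
                hence "x \<in> F1 \<inter> N w1" using Nsym xF1 by blast
                thus False using Nw1 4 by blast
              qed
              moreover have "v \<notin> N x" using 4 Nv' by blast
              moreover have "S - {u} \<subseteq> F1" unfolding S_def by blast
              ultimately have "G \<inter> N x \<subseteq> F1 \<inter> N x" unfolding G_def by blast
              hence "card (G \<inter> N x) \<le> card (F1 \<inter> N x)" using fin1 by (intro card_mono) auto
              thus ?thesis using F1d xF1 by fastforce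
            qed
          qed
        qed
      qed
      thus ?thesis using cG by simp
    qed
  qed
  have finB1: "finite B1" using finMD by (simp add: B1_def)
  have AB1: "card A \<le> card B1"
    using card_inj_on_le[OF f1inj _ finB1] f1B by blast
  have part: "MD = A \<union> B0 \<union> B1"
  proof -
    have "F \<in> A \<union> B0 \<union> B1" if "F \<in> MD" for F
    proof (cases "v \<in> F")
      case True
      hence "card (F \<inter> N v) \<le> 1" using that MDI by blast
      thus ?thesis using that True by (auto simp: A_def B0_def B1_def)
    qed (use that in \<open>auto simp: A_def\<close>)
    thus ?thesis by (auto simp: A_def B0_def B1_def)
  qed
  have finA: "finite A" using finMD by (simp add: A_def)
  have "card MD = card A + card B0 + card B1"
  proof -
    have d1: "A \<inter> B0 = {}" "(A \<union> B0) \<inter> B1 = {}" by (auto simp: A_def B0_def B1_def)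
    have "card (A \<union> B0 \<union> B1) = card (A \<union> B0) + card B1"
      using d1 finA finB0 finB1 by (intro card_Un_disjoint) auto
    also have "card (A \<union> B0) = card A + card B0"
      using d1 finA finB0 by (intro card_Un_disjoint) auto
    finally show ?thesis using part by simp
  qed
  thus ?thesis using AB0 AB1 PhiA PhiB0 PhiB1 PhiMD by simp
qed

end
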